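(* Let $(\mathscr{P},\mathscr{B},\mathrm{I})$ be a linear space with incidence graph $\Gamma$, and let $\varphi$ be a gain function on $\Gamma$ with gain group $G$ acting on the left on a nonempty set $\Lambda$. Let $p,q\in\mathscr{P}$, $b\in\mathscr{B}$ and $\lambda,\mu\in\Lambda$. In $\mathfrak{M}(\Gamma,\varphi)$: (1) if $p=q$, then $d(x_p,z_{q,\lambda})=1$ and $(x_p,z_{q,\lambda})$ is the unique $1$-chain from $x_p$ to $z_{q,\lambda}$; (2) if $p\ne q$, then $d(x_p,z_{q,\lambda})=3$ and there is a unique $3$-chain from $x_p$ to $z_{q,\lambda}$; (3) if $b\ \mathrm{I}\ p$ and $\mu=\varphi(bp)\cdot\lambda$, then $d(y_{b,\lambda},z_{p,\mu})=1$ and $(y_{b,\lambda},z_{p,\mu})$ is the unique $1$-chain from $y_{b,\lambda}$ to $z_{p,\mu}$; (4) if $b\ \mathrm{I}\ p$ and $\mu\ne\varphi(bp)\cdot\lambda$, then $d(y_{b,\lambda},z_{p,\mu})=3$ and there is a unique $3$-chain from $y_{b,\lambda}$ to $z_{p,\mu}$.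
   Context: An incidence structure is a triple $(\mathscr{P},\mathscr{B},\mathrm{I})$ where $\mathscr{P}$ (points) and $\mathscr{B}$ (lines) are nonempty disjoint sets and $\mathrm{I}\subseteq\mathscr{P}\times\mathscr{B}$ is a nonempty incidence relation; write $p\ \mathrm{I}\ b$ when $(p,b)\in\mathrm{I}$. It is a linear space if any two distinct points are incident with exactly one common line, each line is incident with at least two points, and some point and line are not incident. The incidence graph $\Gamma$ is the bipartite graph with vertex set $\mathscr{P}\cup\mathscr{B}$ and an edge $bp$ for each incident pair; every edge is oriented from its line to its point. A gain function with gain group $G$ assigns to each edge $e$ an element $\varphi(e)\in G$. The group $G$ acts on $\Lambda$ on the left. Construction $\mathfrak{M}(\Gamma,\varphi)$: the incidence structure whose points are the formal symbols $x_p$ ($p\in\mathscr{P}$) and $y_{b,\lambda}$ ($b\in\mathscr{B},\lambda\in\Lambda$), whose lines are the formal symbols $z_{p,\lambda}$ ($p\in\mathscr{P},\lambda\in\Lambda$), and whose incidences are exactly: $x_p$ incident with $z_{p,\lambda}$ for all $\lambda$, and $y_{b,\lambda}$ incident with $z_{p,\mu}$ whenever $b\ \mathrm{I}\ p$ and $\mu=\varphi(bp)\cdot\lambda$. A $k$-chain is a sequence $(u_0,\dots,u_k)$ of points/lines with $u_i$ incident with $u_{i-1}$ for $1\le i\le k$; $d(u,v)$ is the least $k$ such that a $k$-chain from $u$ to $v$ exists ($\infty$ if none). *)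

theory Defs
  imports "HOL-Algebra.Group_Action" "HOL-Library.Extended_Nat"
begin

text \<open>Linear space (P, B, I): points of type 'p, lines of type 'b (so P and B are
  automatically disjoint), incidence I a set of pairs (point, line).\<close>
definition linear_space :: "'p set \<Rightarrow> 'b set \<Rightarrow> ('p \<times> 'b) set \<Rightarrow> bool" where
  "linear_space P B I \<longleftrightarrow>
     P \<noteq> {} \<and> B \<noteq> {} \<and> I \<noteq> {} \<and> I \<subseteq> P \<times> B \<and>
     (\<forall>p\<in>P. \<forall>q\<in>P. p \<noteq> q \<longrightarrow> (\<exists>!b. b \<in> B \<and> (p, b) \<in> I \<and> (q, b) \<in> I)) \<and>
     (\<forall>b\<in>B. \<exists>p\<in>P. \<exists>q\<in>P. p \<noteq> q \<and> (p, b) \<in> I \<and> (q, b) \<in> I) \<and>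
     (\<exists>p\<in>P. \<exists>b\<in>B. (p, b) \<notin> I)"

text \<open>Gain function on the incidence graph: the edge bp (oriented from line b to
  point p) gets the gain gain b p in carrier G.\<close>
definition gain_function :: "('g, 'c) monoid_scheme \<Rightarrow> 'p set \<Rightarrow> 'b set \<Rightarrow> ('p \<times> 'b) set
     \<Rightarrow> ('b \<Rightarrow> 'p \<Rightarrow> 'g) \<Rightarrow> bool" where
  "gain_function G P B I gain \<longleftrightarrow> group G \<and> (\<forall>(p, b)\<in>I. gain b p \<in> carrier G)"

text \<open>Elements (points and lines) of the structure M(Gamma, phi):
  MX p = x_p, MY b l = y_{b,l} (points), MZ p l = z_{p,l} (lines).\<close>
datatype ('p, 'b, 'l) melt = MX 'p | MY 'b 'l | MZ 'p 'l

fun M_inc :: "'p set \<Rightarrow> 'b set \<Rightarrow> ('p \<times> 'b) set \<Rightarrow> ('b \<Rightarrow> 'p \<Rightarrow> 'g) \<Rightarrow> ('g \<Rightarrow> 'l \<Rightarrow> 'l)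
     \<Rightarrow> 'l set \<Rightarrow> ('p, 'b, 'l) melt \<Rightarrow> ('p, 'b, 'l) melt \<Rightarrow> bool" where
  "M_inc P B I gain act L (MX p) (MZ p' l) \<longleftrightarrow> p \<in> P \<and> p' = p \<and> l \<in> L"
| "M_inc P B I gain act L (MY b l) (MZ p m) \<longleftrightarrow>
     b \<in> B \<and> l \<in> L \<and> p \<in> P \<and> m \<in> L \<and> (p, b) \<in> I \<and> m = act (gain b p) l"
| "M_inc P B I gain act L _ _ \<longleftrightarrow> False"

definition M_adj where
  "M_adj P B I gain act L u v \<longleftrightarrow> M_inc P B I gain act L u v \<or> M_inc P B I gain act L v u"

definition M_chain where
  "M_chain P B I gain act L k u v us \<longleftrightarrow>
     length us = Suc k \<and> us ! 0 = u \<and> us ! k = v \<and>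
     (\<forall>i<k. M_adj P B I gain act L (us ! Suc i) (us ! i))"

definition M_dist :: "'p set \<Rightarrow> 'b set \<Rightarrow> ('p \<times> 'b) set \<Rightarrow> ('b \<Rightarrow> 'p \<Rightarrow> 'g) \<Rightarrow> ('g \<Rightarrow> 'l \<Rightarrow> 'l)
     \<Rightarrow> 'l set \<Rightarrow> ('p, 'b, 'l) melt \<Rightarrow> ('p, 'b, 'l) melt \<Rightarrow> enat" where
  "M_dist P B I gain act L u v =
     (if \<exists>k us. M_chain P B I gain act L k u v us
      then enat (LEAST k. \<exists>us. M_chain P B I gain act L k u v us) else \<infinity>)"

end

theory Submission
  imports Defs
begin

lemma adj_simps[simp]:
  "M_adj P B I gain act L (MX p) (MZ q l) \<longleftrightarrow> p \<in> P \<and> q = p \<and> l \<in> L"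
  "M_adj P B I gain act L (MZ q l) (MX p) \<longleftrightarrow> p \<in> P \<and> q = p \<and> l \<in> L"
  "M_adj P B I gain act L (MY b l) (MZ p m) \<longleftrightarrow> b \<in> B \<and> l \<in> L \<and> p \<in> P \<and> m \<in> L \<and> (p, b) \<in> I \<and> m = act (gain b p) l"
  "M_adj P B I gain act L (MZ p m) (MY b l) \<longleftrightarrow> b \<in> B \<and> l \<in> L \<and> p \<in> P \<and> m \<in> L \<and> (p, b) \<in> I \<and> m = act (gain b p) l"
  "\<not> M_adj P B I gain act L (MX p) (MX q)"
  "\<not> M_adj P B I gain act L (MX p) (MY b l)"
  "\<not> M_adj P B I gain act L (MY b l) (MX p)"
  "\<not> M_adj P B I gain act L (MY b l) (MY c m)"
  "\<not> M_adj P B I gain act L (MZ p l) (MZ q m)"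
  by (auto simp: M_adj_def)

lemma chain_len:
  "M_chain P B I gain act L k u v us \<Longrightarrow> length us = Suc k"
  by (simp add: M_chain_def)

lemma chain0: "M_chain P B I gain act L 0 u v us \<longleftrightarrow> us = [u] \<and> u = v"
  by (auto simp: M_chain_def length_Suc_conv)

lemma chain1: "M_chain P B I gain act L (Suc 0) u v us \<longleftrightarrow> us = [u, v] \<and> M_adj P B I gain act L v u"
  by (auto simp: M_chain_def length_Suc_conv)

lemma chain2: "M_chain P B I gain act L 2 u v us \<longleftrightarrow> (\<exists>w. us = [u, w, v] \<and> M_adj P B I gain act L w u
   \<and> M_adj P B I gain act L v w)"
  by (auto simp: M_chain_def length_Suc_conv numeral_eq_Suc less_Suc_eq)

lemma chain3: "M_chain P B I gain act L 3 u v us \<longleftrightarrow> (\<exists>w x. us = [u, w, x, v] \<and> M_adj P B I gain act L w u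
   \<and> M_adj P B I gain act L x w \<and> M_adj P B I gain act L v x)"
  by (auto simp: M_chain_def length_Suc_conv numeral_eq_Suc less_Suc_eq)


lemma dist_eq:
  assumes "M_chain P B I gain act L k u v us"
    and "\<And>j us. j < k \<Longrightarrow> \<not> M_chain P B I gain act L j u v us"
  shows "M_dist P B I gain act L u v = enat k"
proof -
  have "(LEAST k. \<exists>us. M_chain P B I gain act L k u v us) = k"
    by (rule Least_equality) (use assms in \<open>auto simp: not_less[symmetric]\<close>)
  then show ?thesis using assms(1) unfolding M_dist_def by auto
qed

lemma no_chain2:
  assumes "\<not> (\<exists>p l. u = MZ p l)"
  shows "\<not> M_chain P B I gain act L 2 u (MZ q lam) us"
  using assms unfolding chain2
  by (cases u) (auto, (case_tac w; auto)+)

lemma lt3: "(j::nat) < 3 \<Longrightarrow> j = 0 \<or> j = 1 \<or> j = 2" by arith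

theorem lemma3:
  fixes P :: "'p set" and B :: "'b set" and I :: "('p \<times> 'b) set"
    and G :: "('g, 'c) monoid_scheme" and gain :: "'b \<Rightarrow> 'p \<Rightarrow> 'g"
    and act :: "'g \<Rightarrow> 'l \<Rightarrow> 'l" and L :: "'l set"
  assumes "linear_space P B I"
    and "gain_function G P B I gain"
    and "group_action G L act"
    and "L \<noteq> {}"
    and "p \<in> P" and "q \<in> P" and "b \<in> B" and "lam \<in> L" and "mu \<in> L"
  shows
    "(p = q \<longrightarrow>
        M_dist P B I gain act L (MX p) (MZ q lam) = 1 \<and>
        (\<forall>us. M_chain P B I gain act L 1 (MX p) (MZ q lam) us \<longleftrightarrow> us = [MX p, MZ q lam])) \<and>
     (p \<noteq> q \<longrightarrow>
        M_dist P B I gain act L (MX p) (MZ q lam) = 3 \<and>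
        (\<exists>!us. M_chain P B I gain act L 3 (MX p) (MZ q lam) us)) \<and>
     ((p, b) \<in> I \<and> mu = act (gain b p) lam \<longrightarrow>
        M_dist P B I gain act L (MY b lam) (MZ p mu) = 1 \<and>
        (\<forall>us. M_chain P B I gain act L 1 (MY b lam) (MZ p mu) us \<longleftrightarrow> us = [MY b lam, MZ p mu])) \<and>
     ((p, b) \<in> I \<and> mu \<noteq> act (gain b p) lam \<longrightarrow>
        M_dist P B I gain act L (MY b lam) (MZ p mu) = 3 \<and>
        (\<exists>!us. M_chain P B I gain act L 3 (MY b lam) (MZ p mu) us))"
proof -
  interpret ga: group_action G L act by fact
  have gc: "\<And>p b. (p, b) \<in> I \<Longrightarrow> gain b p \<in> carrier G"
    using assms(2) unfolding gain_function_def by auto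
  have IPB: "I \<subseteq> P \<times> B" using assms(1) unfolding linear_space_def by auto
  have uniq: "\<And>p q. p \<in> P \<Longrightarrow> q \<in> P \<Longrightarrow> p \<noteq> q \<Longrightarrow> \<exists>!b. b \<in> B \<and> (p, b) \<in> I \<and> (q, b) \<in> I"
    using assms(1) unfolding linear_space_def by blast
  have inj: "\<And>g x y. g \<in> carrier G \<Longrightarrow> x \<in> L \<Longrightarrow> y \<in> L \<Longrightarrow> act g x = act g y \<Longrightarrow> x = y"
    using ga.inj_prop by (meson inj_onD)
  have img: "\<And>g x. g \<in> carrier G \<Longrightarrow> x \<in> L \<Longrightarrow> act g x \<in> L"
    using ga.element_image by blast
  have P1: "p = q \<longrightarrow>
        M_dist P B I gain act L (MX p) (MZ q lam) = 1 \<and>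
        (\<forall>us. M_chain P B I gain act L 1 (MX p) (MZ q lam) us \<longleftrightarrow> us = [MX p, MZ q lam])"
  proof
    assume "p = q"
    have c: "M_chain P B I gain act L 1 (MX p) (MZ q lam) [MX p, MZ q lam]"
      using \<open>p = q\<close> assms by (simp add: chain1)
    have "M_dist P B I gain act L (MX p) (MZ q lam) = enat 1"
      by (rule dist_eq[OF c]) (auto simp: chain0)
    then show "M_dist P B I gain act L (MX p) (MZ q lam) = 1 \<and>
        (\<forall>us. M_chain P B I gain act L 1 (MX p) (MZ q lam) us \<longleftrightarrow> us = [MX p, MZ q lam])"
      using c by (auto simp: chain1 one_enat_def)
  qed
  have P3: "(p, b) \<in> I \<and> mu = act (gain b p) lam \<longrightarrow>
        M_dist P B I gain act L (MY b lam) (MZ p mu) = 1 \<and>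
        (\<forall>us. M_chain P B I gain act L 1 (MY b lam) (MZ p mu) us \<longleftrightarrow> us = [MY b lam, MZ p mu])"
  proof
    assume h: "(p, b) \<in> I \<and> mu = act (gain b p) lam"
    have c: "M_chain P B I gain act L 1 (MY b lam) (MZ p mu) [MY b lam, MZ p mu]"
      using h assms by (simp add: chain1)
    have "M_dist P B I gain act L (MY b lam) (MZ p mu) = enat 1"
      by (rule dist_eq[OF c]) (auto simp: chain0)
    then show "M_dist P B I gain act L (MY b lam) (MZ p mu) = 1 \<and>
        (\<forall>us. M_chain P B I gain act L 1 (MY b lam) (MZ p mu) us \<longleftrightarrow> us = [MY b lam, MZ p mu])"
      using c by (auto simp: chain1 one_enat_def)
  qed
  have P2: "p \<noteq> q \<longrightarrow>
        M_dist P B I gain act L (MX p) (MZ q lam) = 3 \<and>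
        (\<exists>!us. M_chain P B I gain act L 3 (MX p) (MZ q lam) us)"
  proof
    assume pq: "p \<noteq> q"
    obtain c where c: "c \<in> B" "(p, c) \<in> I" "(q, c) \<in> I"
      and cu: "\<And>c'. c' \<in> B \<Longrightarrow> (p, c') \<in> I \<Longrightarrow> (q, c') \<in> I \<Longrightarrow> c' = c"
      using uniq[OF assms(5,6) pq] by blast
    obtain l' where l': "l' \<in> L" "act (gain c q) l' = lam"
      using ga.bij_prop1[OF gc[OF c(3)] assms(8)] by blast
    define l where "l = act (gain c p) l'"
    have lL: "l \<in> L" using img gc c l' l_def by blast
    define us where "us = [MX p, MZ p l, MY c l', MZ q lam]"
    have ch: "M_chain P B I gain act L 3 (MX p) (MZ q lam) us"
      unfolding chain3 us_def using c l' lL l_def assms by auto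
    have "M_dist P B I gain act L (MX p) (MZ q lam) = enat 3"
    proof (rule dist_eq[OF ch])
      fix j vs assume "j < (3::nat)"
      then show "\<not> M_chain P B I gain act L j (MX p) (MZ q lam) vs"
        using lt3[OF \<open>j < 3\<close>] no_chain2[where u="MX p" and P=P and B=B and I=I and gain=gain and act=act and L=L] pq
        by (elim disjE) (auto simp: chain0 chain1)
    qed
    moreover have "\<exists>!us. M_chain P B I gain act L 3 (MX p) (MZ q lam) us"
    proof (rule ex1I[where a=us and P="\<lambda>vs. M_chain P B I gain act L 3 (MX p) (MZ q lam) vs"])
      show "M_chain P B I gain act L 3 (MX p) (MZ q lam) us" by (rule ch)
    next
      fix vs assume "M_chain P B I gain act L 3 (MX p) (MZ q lam) vs"
      then obtain w x where vs: "vs = [MX p, w, x, MZ q lam]"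
        and a1: "M_adj P B I gain act L w (MX p)" and a2: "M_adj P B I gain act L x w"
        and a3: "M_adj P B I gain act L (MZ q lam) x"
        unfolding chain3 by blast
      obtain l1 where w: "w = MZ p l1" using a1 by (cases w) auto
      obtain c2 l2 where x: "x = MY c2 l2" using a2 a3 pq w by (cases x) auto
      have "c2 = c" using cu a2 a3 w x by auto
      then have "l2 = l'" using inj[OF gc[OF c(3)]] a3 x l' by auto
      then show "vs = us" using vs w x a2 \<open>c2 = c\<close> l_def us_def by auto
    qed
    ultimately show "M_dist P B I gain act L (MX p) (MZ q lam) = 3 \<and>
        (\<exists>!us. M_chain P B I gain act L 3 (MX p) (MZ q lam) us)"
      by (simp add: numeral_eq_enat)
  qed
  have P4: "(p, b) \<in> I \<and> mu \<noteq> act (gain b p) lam \<longrightarrow>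
        M_dist P B I gain act L (MY b lam) (MZ p mu) = 3 \<and>
        (\<exists>!us. M_chain P B I gain act L 3 (MY b lam) (MZ p mu) us)"
  proof
    assume h: "(p, b) \<in> I \<and> mu \<noteq> act (gain b p) lam"
    define l where "l = act (gain b p) lam"
    have lL: "l \<in> L" using img gc h assms l_def by blast
    define us where "us = [MY b lam, MZ p l, MX p, MZ p mu]"
    have ch: "M_chain P B I gain act L 3 (MY b lam) (MZ p mu) us"
      unfolding chain3 us_def using h lL l_def assms by auto
    have "M_dist P B I gain act L (MY b lam) (MZ p mu) = enat 3"
    proof (rule dist_eq[OF ch])
      fix j vs assume "j < (3::nat)"
      then show "\<not> M_chain P B I gain act L j (MY b lam) (MZ p mu) vs"
        using lt3[OF \<open>j < 3\<close>] no_chain2[where u="MY b lam" and P=P and B=B and I=I and gain=gain and act=act and L=L] h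
        by (elim disjE) (auto simp: chain0 chain1)
    qed
    moreover have "\<exists>!us. M_chain P B I gain act L 3 (MY b lam) (MZ p mu) us"
    proof (rule ex1I[where a=us and P="\<lambda>vs. M_chain P B I gain act L 3 (MY b lam) (MZ p mu) vs"])
      show "M_chain P B I gain act L 3 (MY b lam) (MZ p mu) us" by (rule ch)
    next
      fix vs assume "M_chain P B I gain act L 3 (MY b lam) (MZ p mu) vs"
      then obtain w x where vs: "vs = [MY b lam, w, x, MZ p mu]"
        and a1: "M_adj P B I gain act L w (MY b lam)" and a2: "M_adj P B I gain act L x w"
        and a3: "M_adj P B I gain act L (MZ p mu) x"
        unfolding chain3 by blast
      obtain p' l1 where w: "w = MZ p' l1" using a1 by (cases w) auto
      have w': "p' \<in> P" "(p', b) \<in> I" "l1 = act (gain b p') lam" using a1 w by auto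
      show "vs = us"
      proof (cases x)
        case (MX x1)
        then show ?thesis using vs w a2 a3 w' l_def us_def by auto
      next
        case (MY c2 l2)
        have x': "c2 \<in> B" "l2 \<in> L" "(p', c2) \<in> I" "(p, c2) \<in> I"
          "l1 = act (gain c2 p') l2" "mu = act (gain c2 p) l2"
          using a2 a3 w MY by auto
        show ?thesis
        proof (cases "p' = p")
          case True
          then show ?thesis using x' w' h by auto
        next
          case False
          have "c2 = b" using uniq[OF w'(1) assms(5) False] x' w' h assms(7) by blast
          then have "l2 = lam" using inj[OF gc[OF w'(2)]] x' w' assms(8) by auto
          then show ?thesis using x' h \<open>c2 = b\<close> by auto
        qed
      next
        case (MZ x31 x32)
        then show ?thesis using a3 by auto
      qed
    qed
    ultimately show "M_dist P B I gain act L (MY b lam) (MZ p mu) = 3 \<and>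
        (\<exists>!us. M_chain P B I gain act L 3 (MY b lam) (MZ p mu) us)"
      by (simp add: numeral_eq_enat)
  qed
  show ?thesis using P1 P2 P3 P4 by blast
qed

end
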